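(* Let $0\le k_1\le k_2$ be integers and $m$ a positive integer, and suppose there exists a perfect $B[-k_1,k_2](m)$ set. Suppose also that $p$ is a prime and $a>0$ an integer with $p\mid m$ and $a\mid p-1$. Let $r$ be a positive integer with $\gcd(a(k_1+k_2),r)=1$ and $p\mid a(k_1+k_2)+r$. If $r\le a$ and $\lfloor k_1/p\rfloor+\lfloor k_2/p\rfloor=\lfloor (k_1+k_2)/p\rfloor$, then $a(k_1+k_2)+r \mid m$.
   Context: For a positive integer $q$, $\mathbb{Z}_q$ is the ring of integers modulo $q$. For integers $a\le b$, $[a,b]^\ast=\{a,a+1,\dots,b\}\setminus\{0\}$. For non-negative integers $0\le k_1\le k_2$ and a positive integer $q$, a set $B\subseteq\mathbb{Z}_q$ is a $B[-k_1,k_2](q)$ set (splitter set) if, for each $b\in B$, the set $\{ab \bmod q: a\in[-k_1,k_2]^\ast\}$ consists of $k_1+k_2$ distinct nonzero elements, and these sets are pairwise disjoint for distinct $b\in B$. Such a set is perfect if $|B|=(q-1)/(k_1+k_2)$; equivalently, every nonzero element of $\mathbb{Z}_q$ has a unique representation $ab$ with $a\in[-k_1,k_2]^\ast$, $b\in B$ (and $0$ has no such representation). *)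

theory Defs
  imports Complex_Main "HOL-Computational_Algebra.Primes"
begin

text \<open>Elements of Z_q are represented by integers in {0..<q}.
  The multiplier set [a,b]* = {a..b} minus {0}.\<close>

definition mult_range :: "int \<Rightarrow> int \<Rightarrow> int set" where
  "mult_range a b = {a..b} - {0}"

definition splitter_orbit :: "int \<Rightarrow> int \<Rightarrow> int \<Rightarrow> int \<Rightarrow> int set" where
  "splitter_orbit k1 k2 q b = (\<lambda>a. (a * b) mod q) ` mult_range (-k1) k2"

definition splitter_set :: "int \<Rightarrow> int \<Rightarrow> int \<Rightarrow> int set \<Rightarrow> bool" where
  "splitter_set k1 k2 q B \<longleftrightarrow>
     B \<subseteq> {0..<q} \<and>
     (\<forall>b\<in>B. inj_on (\<lambda>a. (a * b) mod q) (mult_range (-k1) k2) \<and>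
             0 \<notin> splitter_orbit k1 k2 q b) \<and>
     (\<forall>b\<in>B. \<forall>b'\<in>B. b \<noteq> b' \<longrightarrow> splitter_orbit k1 k2 q b \<inter> splitter_orbit k1 k2 q b' = {})"

definition perfect_splitter_set :: "int \<Rightarrow> int \<Rightarrow> int \<Rightarrow> int set \<Rightarrow> bool" where
  "perfect_splitter_set k1 k2 q B \<longleftrightarrow>
     splitter_set k1 k2 q B \<and> of_nat (card B) = (of_int (q - 1) / of_int (k1 + k2) :: real)"

end

theory Submission
  imports Defs
begin

lemma card_mult_range:
  fixes k1 k2 :: int assumes "0 \<le> k1" "0 \<le> k2"
  shows "card (mult_range (-k1) k2) = nat (k1 + k2)"
proof -
  have "card ({-k1..k2} - {0}) = card {-k1..k2} - 1" using assms by (subst card_Diff_singleton) auto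
  then show ?thesis unfolding mult_range_def using assms by simp
qed

lemma mult_range_multiples:
  fixes k1 k2 p :: int assumes "0 \<le> k1" "0 \<le> k2" "0 < p"
  shows "{x \<in> mult_range (-k1) k2. p dvd x} = (\<lambda>j. p * j) ` mult_range (-(k1 div p)) (k2 div p)"
proof (intro equalityI subsetI)
  fix x assume "x \<in> {x \<in> mult_range (-k1) k2. p dvd x}"
  then obtain j where x: "x = p * j" and r: "-k1 \<le> p*j" "p*j \<le> k2" "j \<noteq> 0"
    unfolding mult_range_def by auto
  have "p*j div p \<le> k2 div p" using r zdiv_mono1 assms by blast
  hence 1: "j \<le> k2 div p" using assms by simp
  have "p*(-j) div p \<le> k1 div p" using r zdiv_mono1[of "p*(-j)" k1 p] assms by simp
  moreover have "p*(-j) div p = -j" using assms by (metis nonzero_mult_div_cancel_left less_irrefl)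
  ultimately have 2: "-j \<le> k1 div p" by simp
  show "x \<in> (\<lambda>j. p * j) ` mult_range (-(k1 div p)) (k2 div p)"
    unfolding mult_range_def using x 1 2 r by auto
next
  fix x assume "x \<in> (\<lambda>j. p * j) ` mult_range (-(k1 div p)) (k2 div p)"
  then obtain j where "x = p * j" "j \<in> mult_range (-(k1 div p)) (k2 div p)" by (rule imageE)
  hence x: "x = p * j" and r: "-(k1 div p) \<le> j" "j \<le> k2 div p" "j \<noteq> 0"
    unfolding mult_range_def by auto
  have "p * j \<le> p * (k2 div p)" using r assms by simp
  also have "\<dots> \<le> k2" using mult_div_mod_eq[of p k2] pos_mod_sign[of p k2] assms by linarith
  finally have 1: "p*j \<le> k2" .
  have "p * (-j) \<le> p * (k1 div p)" using r assms by (intro mult_left_mono) auto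
  also have "\<dots> \<le> k1" using mult_div_mod_eq[of p k1] pos_mod_sign[of p k1] assms by linarith
  finally have 2: "-k1 \<le> p*j" by simp
  show "x \<in> {x \<in> mult_range (-k1) k2. p dvd x}"
    unfolding mult_range_def using x 1 2 r assms by auto
qed

lemma card_multiples:
  fixes k1 k2 p :: int assumes "0 \<le> k1" "0 \<le> k2" "0 < p"
  shows "card {x \<in> mult_range (-k1) k2. p dvd x} = nat (k1 div p + k2 div p)"
proof -
  have "inj_on (\<lambda>j. p * j) (mult_range (-(k1 div p)) (k2 div p))"
    using assms by (auto simp: inj_on_def)
  then have "card {x \<in> mult_range (-k1) k2. p dvd x} = card (mult_range (-(k1 div p)) (k2 div p))"
    by (simp add: mult_range_multiples[OF assms] card_image)
  also have "\<dots> = nat (k1 div p + k2 div p)"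
    using card_mult_range[of "k1 div p" "k2 div p"] assms by (simp add: pos_imp_zdiv_nonneg_iff)
  finally show ?thesis .
qed

lemma card_Z:
  fixes m p :: int assumes "0 < p" "p dvd m" "0 < m"
  shows "card {x \<in> {1..<m}. p dvd x} = nat (m div p - 1)"
proof -
  have mp: "m = p * (m div p)" using assms(2) by simp
  have eq: "{x \<in> {1..<m}. p dvd x} = (\<lambda>j. p * j) ` {1..<m div p}"
  proof (intro equalityI subsetI)
    fix x assume "x \<in> {x \<in> {1..<m}. p dvd x}"
    then obtain j where x: "x = p*j" "1 \<le> p*j" "p*j < m" by auto
    have "0 < p * j" using x by simp
    hence "0 < j" using assms(1) zero_less_mult_pos by blast
    hence 1: "j \<ge> 1" by simp
    have "p * j < p * (m div p)" using x(3) mp by simp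
    hence 2: "j < m div p" using assms(1) mult_less_cancel_left_pos by blast
    show "x \<in> (\<lambda>j. p * j) ` {1..<m div p}" using x(1) 1 2 by auto
  next
    fix x assume "x \<in> (\<lambda>j. p * j) ` {1..<m div p}"
    then obtain j where "x = p*j" "j \<in> {1..<m div p}" by (rule imageE)
    hence x: "x = p*j" "1 \<le> j" "j < m div p" by auto
    have "p * j < p * (m div p)" using x assms(1) by simp
    hence 1: "p*j < m" using mp by simp
    have 2: "1 \<le> p*j" using x assms mult_mono[of 1 p 1 j] by simp
    show "x \<in> {x \<in> {1..<m}. p dvd x}" using x(1) 1 2 by auto
  qed
  have inj: "inj_on (\<lambda>j. p * j) {1..<m div p}" using assms by (auto simp: inj_on_def)
  have "card {x \<in> {1..<m}. p dvd x} = card ((\<lambda>j. p*j) ` {1..<m div p})" by (simp only: eq)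
  also have "\<dots> = card {1..<m div p}" using inj by (rule card_image)
  also have "\<dots> = nat (m div p - 1)" by simp
  finally show ?thesis .
qed


theorem lemma3p4:
  fixes k1 k2 m p a r :: int
  assumes "0 \<le> k1" and "k1 \<le> k2" and "0 < m"
    and "\<exists>B. perfect_splitter_set k1 k2 m B"
    and "prime p" and "0 < a" and "p dvd m" and "a dvd p - 1"
    and "0 < r" and "gcd (a * (k1 + k2)) r = 1" and "p dvd a * (k1 + k2) + r"
    and "r \<le> a"
    and "k1 div p + k2 div p = (k1 + k2) div p"
  shows "a * (k1 + k2) + r dvd m"
proof -
  define k where "k = k1 + k2"
  have p1: "p > 1" using assms(5) prime_gt_1_int by blast
  have kpos: "k > 0"
  proof (rule ccontr)
    assume "\<not> k > 0"
    hence "k = 0" using assms(1,2) k_def by simp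
    hence "r = 1" using assms(9,10) k_def by simp
    hence "p dvd 1" using assms(11) \<open>k = 0\<close> k_def by simp
    thus False using p1 by (simp add: zdvd_imp_le)
  qed
  obtain B where PB: "perfect_splitter_set k1 k2 m B" using assms(4) by blast
  define A where "A = mult_range (-k1) k2"
  have SB: "splitter_set k1 k2 m B" and cardB: "real (card B) = real_of_int (m - 1) / real_of_int k"
    using PB unfolding perfect_splitter_set_def k_def by auto
  have Bsub: "B \<subseteq> {0..<m}" using SB unfolding splitter_set_def by auto
  hence finB: "finite B" using finite_subset by blast
  have finA: "finite A" unfolding A_def mult_range_def by simp
  have cardA: "card A = nat k" unfolding A_def k_def using card_mult_range assms(1,2) by simp
  have kN: "k * int (card B) = m - 1"
  proof -
    have "real_of_int k * real (card B) = real_of_int (m - 1)" using cardB kpos by simp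
    hence "real_of_int (k * int (card B)) = real_of_int (m - 1)" by simp
    thus ?thesis by linarith
  qed
  define f where "f = (\<lambda>(x::int, b::int). (x * b) mod m)"
  have inj: "inj_on f (A \<times> B)"
  proof (rule inj_onI)
    fix u v assume u: "u \<in> A \<times> B" and v: "v \<in> A \<times> B" and fe: "f u = f v"
    obtain x b where ub: "u = (x, b)" by (cases u)
    obtain y c where vc: "v = (y, c)" by (cases v)
    show "u = v"
    proof (cases "b = c")
      case True
      have "inj_on (\<lambda>a. (a * b) mod m) A" using SB u ub unfolding splitter_set_def A_def by auto
      then show ?thesis using u v ub vc fe True f_def by (auto simp: inj_on_def)
    next
      case False
      have "f u \<in> splitter_orbit k1 k2 m b" using u ub unfolding f_def splitter_orbit_def A_def by auto
      moreover have "f v \<in> splitter_orbit k1 k2 m c" using v vc unfolding f_def splitter_orbit_def A_def by auto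
      moreover have bB: "b \<in> B" "c \<in> B" using u v ub vc by auto
      have "\<forall>b\<in>B. \<forall>b'\<in>B. b \<noteq> b' \<longrightarrow> splitter_orbit k1 k2 m b \<inter> splitter_orbit k1 k2 m b' = {}"
        using SB unfolding splitter_set_def by blast
      hence "splitter_orbit k1 k2 m b \<inter> splitter_orbit k1 k2 m c = {}" using bB False by blast
      ultimately show ?thesis using fe by auto
    qed
  qed
  have img_sub: "f ` (A \<times> B) \<subseteq> {1..<m}"
  proof
    fix z assume "z \<in> f ` (A \<times> B)"
    then obtain x b where xb: "x \<in> A" "b \<in> B" "z = (x*b) mod m" unfolding f_def by auto
    have "z \<in> splitter_orbit k1 k2 m b" using xb unfolding splitter_orbit_def A_def by auto
    hence "z \<noteq> 0" using SB xb unfolding splitter_set_def by auto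
    moreover have "0 \<le> z" "z < m" using xb assms(3) by auto
    ultimately show "z \<in> {1..<m}" by auto
  qed
  have cAB: "card (A \<times> B) = card {1..<m}"
  proof -
    have "int (card (A \<times> B)) = k * int (card B)" using cardA kpos by (simp add: card_cartesian_product)
    also have "\<dots> = int (card {1..<m})" using kN assms(3) by simp
    finally show ?thesis by (simp only: of_nat_eq_iff)
  qed
  have img: "f ` (A \<times> B) = {1..<m}"
    using img_sub card_image[OF inj] cAB by (simp add: card_subset_eq)
  define S where "S = {u \<in> A \<times> B. p dvd fst u * snd u}"
  have fS: "f ` S = {x \<in> {1..<m}. p dvd x}"
  proof -
    have key: "p dvd f u \<longleftrightarrow> p dvd fst u * snd u" for u
      unfolding f_def using assms(7) by (cases u) (auto simp: dvd_mod_iff)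
    have "S = {u \<in> A \<times> B. p dvd f u}" unfolding S_def using key by simp
    hence "f ` S = {y \<in> f ` (A \<times> B). p dvd y}" by auto
    thus ?thesis using img by simp
  qed
  have cardS: "card S = nat (m div p - 1)"
  proof -
    have "inj_on f S" using inj unfolding S_def by (rule inj_on_subset) auto
    hence "card S = card (f ` S)" by (simp add: card_image)
    thus ?thesis using fS card_Z[OF _ assms(7,3)] p1 by simp
  qed
  define B0 where "B0 = {b \<in> B. p dvd b}"
  define Ap where "Ap = {x \<in> A. p dvd x}"
  have Sdecomp: "S = (A \<times> B0) \<union> (Ap \<times> (B - B0))"
    unfolding S_def B0_def Ap_def using assms(5) by (auto simp: prime_dvd_mult_iff)
  have disj: "(A \<times> B0) \<inter> (Ap \<times> (B - B0)) = {}" by auto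
  have finB0: "finite B0" using finB B0_def by simp
  have finAp: "finite Ap" using finA Ap_def by simp
  have B0sub: "B0 \<subseteq> B" using B0_def by auto
  have cardAp: "int (card Ap) = (k1 + k2) div p"
    unfolding Ap_def A_def using card_multiples[of k1 k2 p] assms(1,2,13) p1
    by (simp add: pos_imp_zdiv_nonneg_iff)
  have cS: "int (card S) = k * int (card B0) + ((k1+k2) div p) * (int (card B) - int (card B0))"
  proof -
    have "card S = card (A \<times> B0) + card (Ap \<times> (B - B0))"
      unfolding Sdecomp using disj finA finB0 finAp finB by (simp add: card_Un_disjoint)
    also have "\<dots> = card A * card B0 + card Ap * (card B - card B0)"
      using finB0 B0sub by (simp add: card_cartesian_product card_Diff_subset)
    finally have "int (card S) = int (card A) * int (card B0) + int (card Ap) * (int (card B) - int (card B0))"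
      using card_mono[OF finB B0sub] by (simp add: of_nat_diff)
    thus ?thesis using cardA cardAp kpos by simp
  qed
  define c0 where "c0 = k div p"
  define \<rho> where "\<rho> = k mod p"
  define N where "N = int (card B)"
  define b0 where "b0 = int (card B0)"
  define n where "n = a * k + r"
  have H1: "k * N = m - 1" using kN N_def by simp
  have mp: "m = p * (m div p)" using assms(7) by simp
  have H2: "p * (k * b0 + c0 * (N - b0)) = m - p"
  proof -
    have "p \<le> m" using assms(7,3) zdvd_imp_le by blast
    hence "p div p \<le> m div p" using p1 zdiv_mono1[of p m p] by linarith
    hence "m div p \<ge> 1" using p1 by simp
    hence "int (card S) = m div p - 1" using cardS by simp
    hence "k * b0 + c0 * (N - b0) = m div p - 1" using cS c0_def k_def b0_def N_def by simp
    hence "p * (k * b0 + c0 * (N - b0)) = p * (m div p - 1)" by simp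
    also have "\<dots> = p * (m div p) - p" by (simp add: algebra_simps)
    finally show ?thesis using mp by simp
  qed
  have H3: "k = p * c0 + \<rho>" unfolding c0_def \<rho>_def by simp
  obtain e where e: "p - 1 = a * e" using assms(8) by (auto elim: dvdE)
  have "0 < a * e" using e p1 by simp
  hence epos: "e > 0" using assms(6) zero_less_mult_pos by blast
  have "a * 1 \<le> a * e" using epos assms(6) by (intro mult_left_mono) auto
  hence ap: "a < p" using e by simp
  have H4: "\<rho> = e * r"
  proof -
    have "a * k + r = (a * \<rho> + r) + p * (a * c0)" using H3 by (simp add: algebra_simps)
    hence "p dvd a * \<rho> + r" using assms(11) unfolding k_def[symmetric]
      by (metis dvd_add_left_iff dvd_triv_left)
    moreover have "p dvd a * (e * r) + r"
    proof -
      have "a * (e * r) + r = p * r" using e by (simp add: algebra_simps)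
      thus ?thesis by simp
    qed
    ultimately have "p dvd (a * \<rho> + r) - (a * (e * r) + r)" by (rule dvd_diff)
    moreover have "(a * \<rho> + r) - (a * (e * r) + r) = a * (\<rho> - e * r)" by (simp add: algebra_simps)
    ultimately have "p dvd a * (\<rho> - e * r)" by simp
    moreover have "\<not> p dvd a" using ap assms(6) zdvd_imp_le by fastforce
    ultimately have d: "p dvd \<rho> - e * r" using assms(5) prime_dvd_mult_iff by blast
    have "0 \<le> \<rho>" "\<rho> < p" unfolding \<rho>_def using p1 by auto
    moreover have "1 \<le> e * r" using epos assms(9) mult_mono[of 1 e 1 r] by simp
    moreover have "e * r \<le> e * a" using assms(12) epos by (intro mult_left_mono) auto
    ultimately have lt: "\<bar>\<rho> - e * r\<bar> < p" using e by (simp add: mult.commute)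
    have "\<rho> - e * r = 0"
    proof (rule ccontr)
      assume "\<rho> - e * r \<noteq> 0"
      from dvd_imp_le_int[OF this d] have "\<bar>p\<bar> \<le> \<bar>\<rho> - e * r\<bar>" .
      thus False using lt p1 by simp
    qed
    thus ?thesis by simp
  qed
  have key: "\<rho> * m = ((p - 1) * k + \<rho>) * (k * b0 + 1)"
    using H1 H2 H3 by algebra
  have "e * (r * m) = e * (n * (k * b0 + 1))"
    using key H4 e unfolding n_def by algebra
  hence rm: "r * m = n * (k * b0 + 1)" using epos by simp
  have cop: "coprime n r"
  proof -
    have "gcd n r = gcd (a * k) r" unfolding n_def by (rule gcd_add1)
    thus ?thesis using assms(10) k_def by (simp add: coprime_iff_gcd_eq_1)
  qed
  have "n dvd r * m" using rm by simp
  hence "n dvd m" using cop by (simp add: coprime_dvd_mult_right_iff)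
  thus ?thesis unfolding n_def k_def .
qed

end
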